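(* Let $q$ be a prime power and $n\geq 7$. Then either $(n,q)\in\{(10,2),(9,2),(8,3),(8,2),(7,3),(7,2)\}$, or there exist distinct primes $r,s>n+2$ dividing $N=\prod_{i=1}^{m}(q^{2i}-1)$, where $m=\lceil (n-2)/2\rceil$. *)

theory Defs
  imports Complex_Main "HOL-Computational_Algebra.Primes"
begin

definition prime_power :: "nat \<Rightarrow> bool" where
  "prime_power q \<longleftrightarrow> (\<exists>p k. prime p \<and> k \<ge> 1 \<and> q = p ^ k)"

end

theory Submission
  imports Defs "HOL-Number_Theory.Number_Theory"
begin

lemma geom_nat:
  fixes x :: nat assumes "x \<ge> 1"
  shows "x^r - 1 = (x - 1) * (\<Sum>i<r. x^i)"
proof -
  have "int (x^r - 1) = int x ^ r - 1" using assms by (simp add: of_nat_diff)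
  also have "\<dots> = (int x - 1) * (\<Sum>i<r. int x ^ i)" by (rule power_diff_1_eq)
  also have "\<dots> = int ((x - 1) * (\<Sum>i<r. x^i))" using assms by (simp add: of_nat_diff)
  finally show ?thesis by linarith
qed

lemma sum_cong_p:
  fixes x p :: nat assumes "[x = 1] (mod p)"
  shows "[(\<Sum>i<r. x^i) = r] (mod p)"
proof -
  have "[(\<Sum>i<r. x^i) = (\<Sum>i<r. 1)] (mod p)"
    by (rule cong_sum) (use assms cong_pow in fastforce)
  then show ?thesis by simp
qed

lemma pow_cong_p2:
  fixes t p :: nat
  shows "[(1 + t*p)^i = 1 + i*t*p] (mod p^2)"
proof (induct i)
  case 0 then show ?case by simp
next
  case (Suc i)
  have "[(1 + t*p)^Suc i = (1 + i*t*p) * (1 + t*p)] (mod p^2)"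
    using Suc cong_mult[OF Suc cong_refl[of "1+t*p"]] by (simp add: mult.commute)
  moreover have "(1 + i*t*p) * (1 + t*p) = (1 + Suc i*t*p) + (i*t*t)*p^2"
    by (simp add: algebra_simps power2_eq_square)
  moreover have "[(1 + Suc i*t*p) + (i*t*t)*p^2 = 1 + Suc i*t*p] (mod p^2)"
    by (simp add: cong_def)
  ultimately show ?case using cong_trans by metis
qed

lemma gauss2: "2 * (\<Sum>i<n. i) = n * (n - 1::nat)"
proof (induct n)
  case (Suc n) then show ?case by (cases n) (auto simp: algebra_simps)
qed simp

lemma sum_cong_p2:
  fixes x p :: nat assumes "prime p" "odd p" "p dvd x - 1" "x \<ge> 1"
  shows "\<not> p^2 dvd (\<Sum>i<p. x^i)"
proof
  assume H: "p^2 dvd (\<Sum>i<p. x^i)"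
  obtain t where t: "x = 1 + t*p" using assms(3,4)
    by (metis add.commute dvd_def le_add_diff_inverse mult.commute)
  obtain h where h: "p = 2*h+1" using assms(2) oddE by blast
  have "[(\<Sum>i<p. x^i) = (\<Sum>i<p. 1 + i*t*p)] (mod p^2)"
    unfolding t by (rule cong_sum) (rule pow_cong_p2)
  moreover have "(\<Sum>i<p. 1 + i*t*p) = (\<Sum>i<p. 1) + (\<Sum>i<p. i*(t*p))"
    by (subst sum.distrib) (simp add: mult.assoc)
  moreover have "(\<Sum>i<p. i*(t*p)) = t*p*(\<Sum>i<p. i)"
    by (simp add: sum_distrib_left mult.commute)
  moreover have "(\<Sum>i<p. i) = p*h" using gauss2[of p] h by simp
  ultimately have "[(\<Sum>i<p. x^i) = p + (t*h)*p^2] (mod p^2)"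
    by (simp add: algebra_simps power2_eq_square)
  moreover have "[p + (t*h)*p^2 = p] (mod p^2)" by (simp add: cong_def)
  ultimately have "[(\<Sum>i<p. x^i) = p] (mod p^2)" using cong_trans by blast
  then have "p^2 dvd p" using H by (meson cong_dvd_iff)
  then show False using assms(1)
    by (metis One_nat_def nat_dvd_not_less power2_eq_square prime_gt_1_nat
        less_mult_imp_div_less mult.right_neutral nonzero_mult_div_cancel_left not_one_less_zero zero_less_one_class.zero_le_one dvd_mult_cancel1 prime_gt_0_nat nat_mult_dvd_cancel_disj)
qed

lemma lte_lite:
  fixes x p r :: nat
  assumes p: "prime p" and r: "prime r" and x: "x \<ge> 2" and px: "p dvd x - 1"
    and two: "p = 2 \<and> r = 2 \<longrightarrow> 4 dvd x - 1"
  shows "multiplicity p (x^r - 1) \<le> multiplicity p (x - 1) + multiplicity p r"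
proof -
  define S where "S = (\<Sum>i<r. x^i)"
  have r0: "r > 0" using r prime_gt_0_nat by blast
  have S0: "S \<noteq> 0" unfolding S_def using r0 x by (auto simp add: sum_eq_0_iff)
  have eq: "x^r - 1 = (x - 1) * S" unfolding S_def using x by (intro geom_nat) simp
  have x1: "x - 1 \<noteq> 0" using x by simp
  have m: "multiplicity p (x^r - 1) = multiplicity p (x - 1) + multiplicity p S"
    unfolding eq using p x1 S0 by (simp add: prime_elem_multiplicity_mult_distrib)
  have "multiplicity p S \<le> multiplicity p r"
  proof (cases "p = r")
    case False
    have "[x = 1] (mod p)" using px x by (simp add: cong_altdef_nat cong_sym_eq)
    then have c: "[S = r] (mod p)" unfolding S_def by (rule sum_cong_p)
    have "\<not> p dvd S"
    proof
      assume "p dvd S"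
      then have "p dvd r" using c by (meson cong_dvd_iff)
      then show False using False p r by (simp add: primes_dvd_imp_eq)
    qed
    then show ?thesis by (simp add: not_dvd_imp_multiplicity_0)
  next
    case True
    have nd: "\<not> p^2 dvd S"
    proof (cases "p = 2")
      case True
      have r2: "r = 2" using True \<open>p = r\<close> by blast
      then have "r = Suc (Suc 0)" by simp
      then have S1: "S = 1 + x" unfolding S_def by simp
      have "4 dvd x - 1" using two True r2 by blast
      then obtain j where j: "x - 1 = 4*j" by (auto simp: dvd_def)
      have S2: "S = 4*j + 2" using x S1 j by simp
      have n4: "\<not> (4::nat) dvd 4*j + 2"
      proof -
        have "(4::nat) dvd 4*j" by simp
        then have "4 dvd 4*j + 2 \<longleftrightarrow> 4 dvd (2::nat)" by (rule dvd_add_right_iff)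
        moreover have "\<not> (4::nat) dvd 2" by (auto dest: dvd_imp_le)
        ultimately show ?thesis by blast
      qed
      have "p^2 = 4" using True by simp
      then show ?thesis using n4 S2 by simp
    next
      case False
      have "p > 2" using False prime_ge_2_nat[OF p] by linarith
      then have "odd p" using p prime_odd_nat by blast
      moreover have "x \<ge> 1" using x by simp
      ultimately show ?thesis unfolding S_def using sum_cong_p2[OF p _ px] \<open>p = r\<close> by blast
    qed
    have "multiplicity p S < 2" using multiplicity_lessI[of S p 2] nd S0 p by (auto simp: prime_nat_iff)
    then show ?thesis using True p by simp
  qed
  then show ?thesis using m by simp
qed

lemma odd_sq_4: fixes y :: nat assumes "odd y" shows "4 dvd y^2 - 1"
proof -
  obtain t where t: "y = 2*t+1" using assms oddE by blast
  have "y^2 - 1 = 4*(t*t + t)" unfolding t by (simp add: power2_eq_square algebra_simps)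
  then show ?thesis by simp
qed

lemma ZL:
  fixes q k :: nat and D :: "nat set"
  assumes q: "q \<ge> 2" and k: "k \<ge> 1" and fin: "finite D"
   and Ddiv: "\<forall>d\<in>D. d dvd k \<and> prime (k div d)"
   and two: "\<exists>d\<in>D. odd (k div d) \<or> even d"
   and ineq: "k * (\<Prod>d\<in>D. q^d - 1) < q^k - 1"
  shows "\<exists>p. prime p \<and> p dvd q^k - 1 \<and> (\<forall>d\<in>D. \<not> p dvd q^d - 1)"
proof (rule ccontr)
  assume "\<not> ?thesis"
  then have H: "\<And>p. prime p \<Longrightarrow> p dvd q^k - 1 \<Longrightarrow> \<exists>d\<in>D. p dvd q^d - 1" by blast
  define A where "A = q^k - 1"
  define P where "P = (\<Prod>d\<in>D. q^d - 1)"
  have dpos: "d \<ge> 1" if "d \<in> D" for d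
  proof -
    have "d dvd k" using Ddiv that by blast
    then have "d > 0" using dvd_pos_nat[of k d] k by simp
    then show ?thesis by simp
  qed
  have qd: "q^d \<ge> 2" if "d \<ge> 1" for d
  proof -
    have "q^1 \<le> q^d" using that q by (intro power_increasing) auto
    then show ?thesis using q by simp
  qed
  have A0: "A \<noteq> 0" unfolding A_def using qd[OF k] by simp
  have nz: "q^d - 1 \<noteq> 0" if "d \<in> D" for d using qd[OF dpos[OF that]] by simp
  have P0: "P \<noteq> 0" unfolding P_def using fin nz by (simp add: prod_zero_iff)
  have "A dvd k * P"
  proof (rule multiplicity_le_imp_dvd[OF A0])
    fix p :: nat assume p: "prime p"
    show "multiplicity p A \<le> multiplicity p (k * P)"
    proof (cases "p dvd A")
      case False
      then show ?thesis by (simp add: not_dvd_imp_multiplicity_0)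
    next
      case True
      have "\<exists>d\<in>D. p dvd q^d - 1 \<and> (p = 2 \<and> k div d = 2 \<longrightarrow> 4 dvd q^d - 1)"
      proof (cases "p = 2")
        case False
        then show ?thesis using H[OF p] True unfolding A_def by blast
      next
        case p2: True
        then have "even (q^k - 1)" using True unfolding A_def by simp
        have oq: "odd q"
        proof
          assume "even q"
          then have "even (q^k)" using k by simp
          then obtain t where t: "q^k = 2*t" by blast
          have "t \<ge> 1" using qd[OF k] t by simp
          then have "odd (q^k - 1)" unfolding t by presburger
          then show False using \<open>even (q^k - 1)\<close> by blast
        qed
        obtain d where d: "d \<in> D" "odd (k div d) \<or> even d" using two by blast
        have "odd (q^d)" using oq by simp
        then obtain t where "q^d = 2*t+1" by (meson oddE)
        then have e1: "2 dvd q^d - 1" by simp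
        have e2: "k div d = 2 \<longrightarrow> 4 dvd q^d - 1"
        proof
          assume "k div d = 2"
          then have "even d" using d by auto
          then obtain h where "d = 2*h" by blast
          then have "q^d = (q^h)^2" by (simp add: power_mult mult.commute)
          moreover have "odd (q^h)" using oq by simp
          ultimately show "4 dvd q^d - 1" using odd_sq_4 by simp
        qed
        show ?thesis using d(1) e1 e2 p2 by blast
      qed
      then obtain d where d: "d \<in> D" "p dvd q^d - 1" "p = 2 \<and> k div d = 2 \<longrightarrow> 4 dvd q^d - 1"
        by blast
      have r: "prime (k div d)" and dk: "d dvd k" using Ddiv d(1) by auto
      have kd: "k = d * (k div d)" using dk by simp
      have x2: "q^d \<ge> 2" using qd dpos d(1) by blast
      have "multiplicity p A = multiplicity p ((q^d)^(k div d) - 1)"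
        unfolding A_def by (subst kd) (simp add: power_mult)
      also have "\<dots> \<le> multiplicity p (q^d - 1) + multiplicity p (k div d)"
        by (rule lte_lite[OF p r x2 d(2) d(3)])
      also have "\<dots> \<le> multiplicity p P + multiplicity p k"
      proof (rule add_mono)
        show "multiplicity p (q^d - 1) \<le> multiplicity p P"
          by (rule dvd_imp_multiplicity_le[OF _ P0]) (unfold P_def, rule dvd_prodI[OF fin d(1)])
        show "multiplicity p (k div d) \<le> multiplicity p k"
          using k by (intro dvd_imp_multiplicity_le) (auto intro: dvd_triv_right[of "k div d" d, folded kd])
      qed
      also have "\<dots> = multiplicity p (k * P)"
        using p P0 k by (simp add: prime_elem_multiplicity_mult_distrib)
      finally show ?thesis .
    qed
  qed
  then have "A \<le> k * P" using k P0 by (intro dvd_imp_le) auto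
  then show False using ineq unfolding A_def P_def by simp
qed

lemma dvd_pow_minus1_cong:
  fixes q p j :: nat assumes "q \<ge> 1"
  shows "p dvd q^j - 1 \<longleftrightarrow> [q^j = 1] (mod p)"
proof -
  have "q^j \<ge> 1" using assms by simp
  then show ?thesis by (simp add: cong_altdef_nat)
qed

lemma prime_dvd_pm1_coprime:
  fixes q p k :: nat assumes "prime p" "p dvd q^k - 1" "k \<ge> 1" "q \<ge> 2"
  shows "coprime p q"
proof -
  have "\<not> p dvd q"
  proof
    assume "p dvd q"
    then have "p dvd q^k" using assms(3) dvd_power_le[of p q 1 k] by simp
    moreover have "q^k \<ge> 1" using assms(4) by simp
    ultimately have "p dvd q^k - (q^k - 1)" using assms(2) dvd_diff_nat by blast
    moreover have "q^k - (q^k - 1) = 1" using \<open>q^k \<ge> 1\<close> by simp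
    ultimately have "p dvd 1" by metis
    then show False using assms(1) by simp
  qed
  then show ?thesis using assms(1) by (simp add: prime_imp_coprime)
qed

lemma ord_dvd_iff:
  fixes q p j :: nat assumes "q \<ge> 1"
  shows "p dvd q^j - 1 \<longleftrightarrow> ord p q dvd j"
  using dvd_pow_minus1_cong[OF assms] ord_divides by simp

lemma prim_ord:
  fixes q p k :: nat and D :: "nat set"
  assumes q: "q \<ge> 2" and p: "prime p" and pk: "p dvd q^k - 1" and k: "k \<ge> 1"
    and nd: "\<forall>d\<in>D. \<not> p dvd q^d - 1"
    and cover: "\<And>e. e dvd k \<Longrightarrow> e < k \<Longrightarrow> \<exists>d\<in>D. e dvd d"
  shows "ord p q = k"
proof -
  have q1: "q \<ge> 1" using q by simp
  have ok: "ord p q dvd k" using pk ord_dvd_iff[OF q1] by simp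
  have "coprime p q" using prime_dvd_pm1_coprime[OF p pk k q] .
  then have o0: "ord p q > 0" by simp
  have "ord p q \<le> k" using ok k by (simp add: dvd_imp_le)
  moreover have "\<not> ord p q < k"
  proof
    assume "ord p q < k"
    then obtain d where d: "d \<in> D" "ord p q dvd d" using cover ok by blast
    then have "p dvd q^d - 1" using ord_dvd_iff[OF q1] by simp
    then show False using nd d(1) by blast
  qed
  ultimately show ?thesis by simp
qed

lemma ord_dvd_pm1:
  fixes q p :: nat assumes p: "prime p" and o: "ord p q > 0"
  shows "ord p q dvd p - 1"
proof -
  have "coprime p q" using o by simp
  then have "\<not> p dvd q" using p by (meson coprime_absorb_left coprime_commute not_prime_unit prime_nat_iff)
  then have "[q^(p-1) = 1] (mod p)" using fermat_theorem p by blast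
  then show ?thesis using ord_divides by blast
qed

lemma ineq2:
  fixes q k d1 d2 :: nat
  assumes q: "q \<ge> 2" and d: "d1 \<ge> 1" "d2 \<ge> 1" "d1 + d2 \<le> k" and kk: "k < 2^(k - d1 - d2)"
  shows "k * ((q^d1 - 1) * (q^d2 - 1)) < q^k - 1"
proof -
  have k0: "k > 0" using d by simp
  have "(q^d1 - 1) * (q^d2 - 1) < q^d1 * q^d2"
  proof -
    have "q^d1 - 1 < q^d1" using q by simp
    moreover have "q^d2 - 1 \<le> q^d2" by simp
    moreover have "q^d2 - 1 > 0"
    proof -
      have "q^1 \<le> q^d2" using q d(2) by (intro power_increasing) auto
      then show ?thesis using q by simp
    qed
    ultimately show ?thesis by (meson mult_less_le_imp_less zero_le)
  qed
  then have a: "k * ((q^d1 - 1) * (q^d2 - 1)) < k * (q^d1 * q^d2)" using k0 by simp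
  have "k * (q^d1 * q^d2) < 2^(k - d1 - d2) * q^(d1 + d2)" using kk q by (simp add: power_add)
  also have "\<dots> \<le> q^(k - d1 - d2) * q^(d1 + d2)" using q by (simp add: power_mono)
  also have "\<dots> = q^k" using d(3) by (simp flip: power_add)
  finally show ?thesis using a by linarith
qed

lemma ineq1:
  fixes q k d :: nat
  assumes q: "q \<ge> 2" and d: "d \<ge> 1" "d \<le> k" and kk: "k < 2^(k - d)"
  shows "k * (q^d - 1) < q^k - 1"
proof -
  have k0: "k > 0" using d by simp
  have "q^d - 1 < q^d" using q by simp
  then have a: "k * (q^d - 1) < k * q^d" using k0 by simp
  have "k * q^d < 2^(k - d) * q^d" using kk q by simp
  also have "\<dots> \<le> q^(k - d) * q^d" using q by (simp add: power_mono)
  also have "\<dots> = q^k" using d(2) by (simp flip: power_add)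
  finally show ?thesis using a by linarith
qed

lemma exists_2c:
  fixes q k a c :: nat
  assumes q: "q \<ge> 2" and kdef: "k = 2^a * c" and a: "a \<ge> 1" and c: "prime c" "c \<noteq> 2"
    and ineq: "k * ((q^(k div 2) - 1) * (q^(k div c) - 1)) < q^k - 1"
  shows "\<exists>p. prime p \<and> p dvd q^k - 1 \<and> ord p q = k"
proof -
  define D where "D = {k div 2, k div c}"
  have c2: "c > 2" using c prime_ge_2_nat[of c] by linarith
  have oc: "odd c" using c c2 prime_odd_nat by blast
  have k1: "k \<ge> 1" unfolding kdef using c2 by simp
  have ek: "even k" unfolding kdef using a by simp
  have ck: "c dvd k" unfolding kdef by simp
  have k2: "k div 2 * 2 = k" using ek by simp
  have kc: "k div c * c = k" using ck by simp
  have neq: "k div 2 \<noteq> k div c"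
  proof
    assume "k div 2 = k div c"
    then have "k div 2 * c = k" using kc by simp
    then have "k div 2 * c = k div 2 * 2" using k2 by simp
    moreover have "k div 2 > 0" using k1 ek by (cases "k = 1") auto
    ultimately have "c = 2" by simp
    then show False using c by simp
  qed
  have prodD: "(\<Prod>d\<in>D. q^d - 1) = (q^(k div 2) - 1) * (q^(k div c) - 1)"
    unfolding D_def using neq by simp
  have Ddiv: "\<forall>d\<in>D. d dvd k \<and> prime (k div d)"
  proof -
    have h2: "k div 2 > 0" using k1 ek by (cases "k = 1") auto
    have "k div (k div 2) = (k div 2 * 2) div (k div 2)" using k2 by simp
    also have "\<dots> = 2" using h2 by simp
    finally have "k div (k div 2) = 2" .
    moreover have "k div (k div c) = c" using kc k1 c2
      by (metis div_mult_self1_is_m gr_zeroI mult_zero_left not_one_le_zero)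
    moreover have "k div 2 dvd k" "k div c dvd k" using k2 kc by (metis dvd_triv_left)+
    ultimately show ?thesis unfolding D_def using c by auto
  qed
  have two: "\<exists>d\<in>D. odd (k div d) \<or> even d"
  proof -
    have "k div (k div c) = c" using kc k1 c2
      by (metis div_mult_self1_is_m gr_zeroI mult_zero_left not_one_le_zero)
    then show ?thesis unfolding D_def using oc by auto
  qed
  obtain p where p: "prime p" "p dvd q^k - 1" "\<forall>d\<in>D. \<not> p dvd q^d - 1"
    using ZL[OF q k1 _ Ddiv two] ineq prodD unfolding D_def by auto
  have cover: "\<exists>d\<in>D. e dvd d" if e: "e dvd k" "e < k" for e
  proof -
    obtain j where j: "k = e * j" using e(1) by blast
    have "j \<noteq> 1" using j e(2) by auto
    have "j \<noteq> 0" using j k1 by auto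
    show ?thesis
    proof (cases "even j")
      case True
      then obtain j' where "j = 2 * j'" by blast
      then have "k div 2 = e * j'" using j by simp
      then show ?thesis unfolding D_def by auto
    next
      case False
      have "j dvd 2^a * c" using j kdef by (metis dvd_triv_right)
      moreover have "coprime j (2^a)" using False by simp
      ultimately have "j dvd c" using coprime_dvd_mult_right_iff by blast
      then have "j = c" using c(1) \<open>j \<noteq> 1\<close> unfolding prime_nat_iff by auto
      then have "k div c = e" using j c2 by simp
      then show ?thesis unfolding D_def by auto
    qed
  qed
  have "ord p q = k" using prim_ord[OF q p(1) p(2) k1 p(3) cover] by blast
  then show ?thesis using p by blast
qed

lemma exists_2pow:
  fixes q k a :: nat
  assumes q: "q \<ge> 2" and kdef: "k = 2^a" and a: "a \<ge> 2"
    and ineq: "k * (q^(k div 2) - 1) < q^k - 1"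
  shows "\<exists>p. prime p \<and> p dvd q^k - 1 \<and> ord p q = k"
proof -
  define D where "D = {k div 2}"
  obtain b where b: "a = Suc b" using a by (cases a) auto
  have k2b: "k = 2 * 2^b" unfolding kdef b by simp
  have k1: "k \<ge> 1" unfolding kdef by simp
  have kd2: "k div 2 = 2^(a-1)" unfolding k2b b by simp
  have Ddiv: "\<forall>d\<in>D. d dvd k \<and> prime (k div d)"
  proof -
    have "k div (k div 2) = 2" "k div 2 dvd k" unfolding kd2 k2b b by simp_all
    then show ?thesis unfolding D_def by auto
  qed
  have two: "\<exists>d\<in>D. odd (k div d) \<or> even d"
    unfolding D_def kd2 using a by simp
  obtain p where p: "prime p" "p dvd q^k - 1" "\<forall>d\<in>D. \<not> p dvd q^d - 1"
    using ZL[OF q k1 _ Ddiv two] ineq unfolding D_def by auto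
  have cover: "\<exists>d\<in>D. e dvd d" if e: "e dvd k" "e < k" for e
  proof -
    obtain i where i: "i \<le> a" "e = 2^i" using e(1) divides_primepow_nat[of 2 e a] kdef by auto
    have "i \<noteq> a" using e(2) i kdef by auto
    then have "i \<le> a - 1" using i by simp
    then have "e dvd 2^(a-1)" using i by (simp add: le_imp_power_dvd)
    then show ?thesis unfolding D_def kd2 by simp
  qed
  have "ord p q = k" using prim_ord[OF q p(1) p(2) k1 p(3) cover] by blast
  then show ?thesis using p by blast
qed

lemma exists_oddprime:
  fixes q k :: nat
  assumes q: "q \<ge> 2" and k: "prime k" "k \<noteq> 2"
    and ineq: "k * (q - 1) < q^k - 1"
  shows "\<exists>p. prime p \<and> p dvd q^k - 1 \<and> ord p q = k"
proof -
  define D where "D = {1::nat}"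
  have k1: "k \<ge> 1" using k prime_ge_1_nat by blast
  have ok: "odd k" using k prime_ge_2_nat[of k] prime_odd_nat by force
  have Ddiv: "\<forall>d\<in>D. d dvd k \<and> prime (k div d)" unfolding D_def using k by simp
  have two: "\<exists>d\<in>D. odd (k div d) \<or> even d" unfolding D_def using ok by simp
  obtain p where p: "prime p" "p dvd q^k - 1" "\<forall>d\<in>D. \<not> p dvd q^d - 1"
    using ZL[OF q k1 _ Ddiv two] ineq unfolding D_def by auto
  have cover: "\<exists>d\<in>D. e dvd d" if e: "e dvd k" "e < k" for e
  proof -
    have "e = 1" using e k(1) by (auto simp: prime_nat_iff)
    then show ?thesis unfolding D_def by simp
  qed
  have "ord p q = k" using prim_ord[OF q p(1) p(2) k1 p(3) cover] by blast
  then show ?thesis using p by blast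
qed

lemma only_prime_power:
  fixes n r :: nat
  assumes "n > 0" "prime r" "\<And>p. prime p \<Longrightarrow> p dvd n \<Longrightarrow> p = r"
  shows "\<exists>j. n = r^j"
  using assms
proof (induct n rule: less_induct)
  case (less n)
  show ?case
  proof (cases "n = 1")
    case True then show ?thesis by (intro exI[of _ 0]) simp
  next
    case False
    obtain p where p: "prime p" "p dvd n" using prime_factor_nat[OF False] by blast
    then have "p = r" using less.prems by blast
    then obtain n' where n': "n = r * n'" using p by blast
    have r1: "r > 1" using less.prems(2) prime_gt_1_nat by blast
    have n'0: "n' > 0" using n' less.prems(1) by simp
    have "n' < n" using n' r1 n'0 by simp
    moreover have "\<And>p. prime p \<Longrightarrow> p dvd n' \<Longrightarrow> p = r" using less.prems(3) n' by simp
    ultimately obtain j where "n' = r^j" using less.hyps n'0 less.prems(2) by blast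
    then show ?thesis using n' by (intro exI[of _ "Suc j"]) simp
  qed
qed

lemma int_dvd_minus1:
  fixes p q k :: nat assumes "q \<ge> 1"
  shows "p dvd q^k - 1 \<longleftrightarrow> int p dvd int q ^ k - 1"
proof -
  have "q^k \<ge> 1" using assms by simp
  then have "int (q^k - 1) = int q ^ k - 1" by (simp add: of_nat_diff)
  then show ?thesis by (metis of_nat_dvd_iff)
qed

lemma F_mod9:
  fixes q :: int
  shows "\<not> 9 dvd q^2 - q + 1"
proof
  assume H: "9 dvd q^2 - q + 1"
  define t where "t = q mod 9"
  define s where "s = q div 9"
  have t: "0 \<le> t" "t < 9" unfolding t_def by simp_all
  have qst: "q = 9 * s + t" unfolding s_def t_def by simp
  have E: "q^2 - q + 1 = 9 * (9*s^2 + 2*s*t - s) + (t^2 - t + 1)" unfolding qst by (simp add: algebra_simps power2_eq_square)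
  have "9 dvd 9 * (9*s^2 + 2*s*t - s) + (t^2 - t + 1)" using H unfolding E .
  then have "9 dvd t^2 - t + 1" by (simp add: dvd_add_right_iff)
  moreover have "t \<in> {0,1,2,3,4,5,6,7,8}" using t by auto
  ultimately show False by (auto simp: power2_eq_square)
qed

lemma exists_6:
  fixes q :: nat assumes q: "q \<ge> 3"
  shows "\<exists>p. prime p \<and> p dvd q^6 - 1 \<and> ord p q = 6"
proof -
  define Q where "Q = int q"
  define F where "F = q^2 - q + 1"
  have q1: "q \<ge> 1" "q \<ge> 2" using q by auto
  have FQ: "int F = Q^2 - Q + 1" unfolding F_def Q_def
    using q by (simp add: of_nat_diff power2_eq_square)
  have F7: "F \<ge> 7"
  proof -
    have "q^2 - q = q * (q - 1)" by (simp add: power2_eq_square algebra_simps)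
    moreover have "q * (q - 1) \<ge> 3 * 2" using q by (intro mult_mono) auto
    ultimately show ?thesis unfolding F_def by linarith
  qed
  have "\<exists>p. prime p \<and> p dvd F \<and> p \<noteq> 3"
  proof (rule ccontr)
    assume "\<not> ?thesis"
    then have "\<And>p. prime p \<Longrightarrow> p dvd F \<Longrightarrow> p = 3" by blast
    then obtain j where j: "F = 3^j" using only_prime_power[of F 3] F7 by auto
    have "j \<ge> 2"
    proof (rule ccontr)
      assume "\<not> j \<ge> 2"
      then have "j = 0 \<or> j = 1" by auto
      then show False using j F7 by auto
    qed
    then have "(3::nat)^2 dvd 3^j" by (rule le_imp_power_dvd)
    then have "(9::nat) dvd F" unfolding j by simp
    then have "(9::int) dvd int F" by (metis of_nat_dvd_iff of_nat_numeral)
    then show False using F_mod9[of Q] FQ by simp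
  qed
  then obtain p where p: "prime p" "p dvd F" "p \<noteq> 3" by blast
  have pF: "int p dvd Q^2 - Q + 1" using p(2) FQ by (metis of_nat_dvd_iff)
  have p6: "int p dvd Q^6 - 1"
  proof -
    have "Q^6 - 1 = (Q^3 - 1) * (Q + 1) * (Q^2 - Q + 1)" by (simp add: algebra_simps eval_nat_numeral)
    then show ?thesis using pF by simp
  qed
  have n3: "\<not> int p dvd Q^3 - 1"
  proof
    assume h: "int p dvd Q^3 - 1"
    have "Q^3 + 1 = (Q + 1) * (Q^2 - Q + 1)" by (simp add: algebra_simps eval_nat_numeral)
    then have "int p dvd Q^3 + 1" using pF by simp
    then have "int p dvd (Q^3 + 1) - (Q^3 - 1)" using h by (rule dvd_diff)
    then have "int p dvd 2" by simp
    then have "p dvd 2" by (metis of_nat_dvd_iff of_nat_numeral)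
    then have "p \<le> 2" by (rule dvd_imp_le) simp
    then have "p = 2" using prime_ge_2_nat[OF p(1)] by simp
    moreover have "odd F"
    proof -
      have "even (q^2 - q)" by (simp add: power2_eq_square)
      then show ?thesis unfolding F_def by simp
    qed
    ultimately show False using p(2) by simp
  qed
  have n2: "\<not> int p dvd Q^2 - 1"
  proof
    assume h: "int p dvd Q^2 - 1"
    have "int p dvd (Q^2 - Q + 1) - (Q^2 - 1)" using pF h by (rule dvd_diff)
    then have h2: "int p dvd 2 - Q" by simp
    have "3 = (Q^2 - Q + 1) + (2 - Q) * (Q + 1)" by (simp add: algebra_simps eval_nat_numeral)
    moreover have "int p dvd (Q^2 - Q + 1) + (2 - Q) * (Q + 1)" using pF h2 by simp
    ultimately have "int p dvd 3" by metis
    then have "p dvd 3" by (metis of_nat_dvd_iff of_nat_numeral)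
    then have "p \<le> 3" by (rule dvd_imp_le) simp
    moreover have "p \<noteq> 2" using \<open>p dvd 3\<close> by auto
    ultimately have "p = 3" using prime_ge_2_nat[OF p(1)] by simp
    then show False using p(3) by simp
  qed
  have pk: "p dvd q^6 - 1" using p6 int_dvd_minus1[OF q1(1)] unfolding Q_def by simp
  have nd: "\<forall>d\<in>{3,2}. \<not> p dvd q^d - 1"
    using n3 n2 int_dvd_minus1[OF q1(1)] unfolding Q_def by auto
  have cover: "\<exists>d\<in>{3,2}. e dvd d" if e: "e dvd 6" "e < 6" for e :: nat
  proof -
    have "e \<le> 6" using e by (simp add: dvd_imp_le)
    then have "e \<in> {0,1,2,3,4,5}" using e(2) by auto
    then show ?thesis using e(1) by auto
  qed
  have "ord p q = 6" using prim_ord[OF q1(2) p(1) pk _ nd cover] by simp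
  then show ?thesis using p pk by blast
qed

definition NN :: "nat \<Rightarrow> nat \<Rightarrow> nat" where
  "NN m q = (\<Prod>i=1..m. q^(2*i) - 1)"

definition twobig :: "nat \<Rightarrow> nat \<Rightarrow> bool" where
  "twobig m q \<longleftrightarrow> (\<exists>r s. prime r \<and> prime s \<and> r \<noteq> s \<and> 2*m+4 < r \<and> 2*m+4 < s \<and>
      r dvd NN m q \<and> s dvd NN m q)"

lemma ord_dvd_NN:
  fixes p q k m :: nat
  assumes q: "q \<ge> 2" and o: "ord p q = k" and k: "k \<ge> 1" and km: "(even k \<and> k \<le> 2*m) \<or> k \<le> m"
  shows "p dvd NN m q"
proof -
  have q1: "q \<ge> 1" using q by simp
  obtain i where i: "1 \<le> i" "i \<le> m" "k dvd 2*i"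
  proof (cases "even k \<and> k \<le> 2*m")
    case True
    then obtain h where h: "k = 2*h" by blast
    show ?thesis using that[of h] True h k by auto
  next
    case False
    then show ?thesis using that[of k] km k by auto
  qed
  have "p dvd q^(2*i) - 1" using ord_dvd_iff[OF q1] o i(3) by simp
  also have "q^(2*i) - 1 dvd NN m q" unfolding NN_def using i by (intro dvd_prodI) auto
  finally show ?thesis .
qed

lemma ord_prime_odd:
  fixes p q k :: nat
  assumes p: "prime p" and o: "ord p q = k" and k: "k \<ge> 2"
  shows "odd p"
proof
  assume "even p"
  then have "p = 2" using p prime_odd_nat prime_ge_2_nat[OF p] by (metis le_neq_implies_less)
  moreover have "k dvd p - 1"
  proof -
    have "ord p q > 0" using o k by simp
    from ord_dvd_pm1[OF p this] show ?thesis using o by simp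
  qed
  ultimately show False using k by simp
qed

lemma good_k:
  fixes p q k m :: nat
  assumes p: "prime p" and o: "ord p q = k" and k3: "k mod 3 = 2" and mk: "m + 2 \<le> k" and m: "m \<ge> 1"
  shows "2*m+4 < p"
proof -
  have "k dvd p - 1"
  proof -
    have "ord p q > 0" using o mk by simp
    from ord_dvd_pm1[OF p this] show ?thesis using o by simp
  qed
  then obtain j where j: "p - 1 = k * j" by blast
  have p2: "p \<ge> 2" using prime_ge_2_nat[OF p] .
  have "j \<noteq> 0" proof assume "j = 0" then show False using j p2 by simp qed
  moreover have "j \<noteq> 1"
  proof
    assume "j = 1"
    then have pk: "p = k + 1" using j p2 by simp
    have "3 dvd p" unfolding pk using k3 by presburger
    then have "p = 3" using p unfolding prime_nat_iff by force
    then show False using pk mk m by simp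
  qed
  ultimately have "j \<ge> 2" by simp
  then have "k * j \<ge> k * 2" by simp
  then show ?thesis using j mk p2 by linarith
qed

lemma big_from_k:
  fixes q k m :: nat
  assumes q: "q \<ge> 2" and m: "m \<ge> 1" and k: "even k" "k \<le> 2*m" "m + 2 \<le> k" "k mod 3 = 2"
    and ex: "\<exists>p. prime p \<and> p dvd q^k - 1 \<and> ord p q = k"
  shows "\<exists>p. prime p \<and> ord p q = k \<and> 2*m+4 < p \<and> p dvd NN m q"
proof -
  obtain p where p: "prime p" "ord p q = k" using ex by blast
  have "2*m+4 < p" using good_k[OF p(1) p(2) k(4) k(3) m] .
  moreover have "p dvd NN m q" using ord_dvd_NN[OF q p(2)] k by auto
  ultimately show ?thesis using p by blast
qed

lemma twobig_of_two_k:
  fixes q m k1 k2 :: nat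
  assumes "k1 \<noteq> k2"
    and "\<exists>p. prime p \<and> ord p q = k1 \<and> 2*m+4 < p \<and> p dvd NN m q"
    and "\<exists>p. prime p \<and> ord p q = k2 \<and> 2*m+4 < p \<and> p dvd NN m q"
  shows "twobig m q"
proof -
  obtain p1 where p1: "prime p1" "ord p1 q = k1" "2*m+4 < p1" "p1 dvd NN m q" using assms(2) by blast
  obtain p2 where p2: "prime p2" "ord p2 q = k2" "2*m+4 < p2" "p2 dvd NN m q" using assms(3) by blast
  have "p1 \<noteq> p2" using p1(2) p2(2) assms(1) by auto
  then show ?thesis unfolding twobig_def
    by (intro exI[of _ p1] exI[of _ p2]) (simp add: p1 p2)
qed

lemma big_2c:
  fixes q k m a c :: nat
  assumes q: "q \<ge> 2" and m: "m \<ge> 1" and kdef: "k = 2^a * c" and a: "a \<ge> 1" and c: "prime c" "c \<noteq> 2"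
    and kk: "k < 2^(k - k div 2 - k div c)"
    and k: "k \<le> 2*m" "m + 2 \<le> k" "k mod 3 = 2"
  shows "\<exists>p. prime p \<and> ord p q = k \<and> 2*m+4 < p \<and> p dvd NN m q"
proof -
  have c2: "c > 2" using c prime_ge_2_nat[of c] by linarith
  have ek: "even k" unfolding kdef using a by simp
  have k2: "k div 2 \<ge> 1" using k m by simp
  have "c dvd k" unfolding kdef by simp
  then have "c \<le> k" using k m by (intro dvd_imp_le) auto
  then have kc: "k div c \<ge> 1" using c2 div_greater_zero_iff[of k c] by simp
  have s: "k div 2 + k div c \<le> k"
  proof -
    have "k div c \<le> k div 3" using c2 by (simp add: div_le_mono2)
    then show ?thesis by linarith
  qed
  have "k * ((q^(k div 2) - 1) * (q^(k div c) - 1)) < q^k - 1"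
    using ineq2[OF q k2 kc s] kk by simp
  then have "\<exists>p. prime p \<and> p dvd q^k - 1 \<and> ord p q = k" using exists_2c[OF q kdef a c] by blast
  then show ?thesis using big_from_k[OF q m ek k] by blast
qed

lemma big_2pow:
  fixes q k m a :: nat
  assumes q: "q \<ge> 2" and m: "m \<ge> 1" and kdef: "k = 2^a" and a: "a \<ge> 2"
    and kk: "k < 2^(k - k div 2)"
    and k: "k \<le> 2*m" "m + 2 \<le> k" "k mod 3 = 2"
  shows "\<exists>p. prime p \<and> ord p q = k \<and> 2*m+4 < p \<and> p dvd NN m q"
proof -
  have ek: "even k" unfolding kdef using a by simp
  have k2: "k div 2 \<ge> 1" using k m by simp
  have "k * (q^(k div 2) - 1) < q^k - 1"
    using ineq1[OF q k2 _ kk] by simp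
  then have "\<exists>p. prime p \<and> p dvd q^k - 1 \<and> ord p q = k" using exists_2pow[OF q kdef a] by blast
  then show ?thesis using big_from_k[OF q m ek k] by blast
qed

lemma primeI_num: "prime (5::nat)" "prime (7::nat)" "prime (11::nat)" "prime (13::nat)"
   "prime (17::nat)" "prime (19::nat)" "prime (29::nat)" "prime (31::nat)" "prime (37::nat)"
   "prime (41::nat)" "prime (43::nat)" "prime (307::nat)"
  unfolding prime_nat_iff' by (simp_all add: atLeastLessThan_upt upt_rec)

lemma k14: "q \<ge> 2 \<Longrightarrow> 7 \<le> m \<Longrightarrow> m \<le> 12 \<Longrightarrow> \<exists>p. prime p \<and> ord p q = 14 \<and> 2*m+4 < p \<and> p dvd NN m q"
  by (rule big_2c[where a=1 and c=7]) (auto simp: primeI_num)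
lemma k20: "q \<ge> 2 \<Longrightarrow> 10 \<le> m \<Longrightarrow> m \<le> 18 \<Longrightarrow> \<exists>p. prime p \<and> ord p q = 20 \<and> 2*m+4 < p \<and> p dvd NN m q"
  by (rule big_2c[where a=2 and c=5]) (auto simp: primeI_num)
lemma k26: "q \<ge> 2 \<Longrightarrow> 13 \<le> m \<Longrightarrow> m \<le> 24 \<Longrightarrow> \<exists>p. prime p \<and> ord p q = 26 \<and> 2*m+4 < p \<and> p dvd NN m q"
  by (rule big_2c[where a=1 and c=13]) (auto simp: primeI_num)
lemma k32: "q \<ge> 2 \<Longrightarrow> 16 \<le> m \<Longrightarrow> m \<le> 30 \<Longrightarrow> \<exists>p. prime p \<and> ord p q = 32 \<and> 2*m+4 < p \<and> p dvd NN m q"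
  by (rule big_2pow[where a=5]) auto
lemma k38: "q \<ge> 2 \<Longrightarrow> 19 \<le> m \<Longrightarrow> m \<le> 36 \<Longrightarrow> \<exists>p. prime p \<and> ord p q = 38 \<and> 2*m+4 < p \<and> p dvd NN m q"
  by (rule big_2c[where a=1 and c=19]) (auto simp: primeI_num)
lemma k44: "q \<ge> 2 \<Longrightarrow> 22 \<le> m \<Longrightarrow> m \<le> 42 \<Longrightarrow> \<exists>p. prime p \<and> ord p q = 44 \<and> 2*m+4 < p \<and> p dvd NN m q"
  by (rule big_2c[where a=2 and c=11]) (auto simp: primeI_num)

lemma mid_range:
  assumes q: "q \<ge> 2" and m: "10 \<le> m" "m \<le> 31"
  shows "twobig m q"
proof -
  consider "m \<le> 12" | "13 \<le> m \<and> m \<le> 18" | "19 \<le> m \<and> m \<le> 24" | "25 \<le> m \<and> m \<le> 30" | "m = 31"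
    using m by linarith
  then show ?thesis
  proof cases
    case 1 then show ?thesis using k14[OF q, of m] k20[OF q, of m] m by (intro twobig_of_two_k[of 14 20]) auto
  next
    case 2 then show ?thesis using k20[OF q, of m] k26[OF q, of m] m by (intro twobig_of_two_k[of 20 26]) auto
  next
    case 3 then show ?thesis using k26[OF q, of m] k32[OF q, of m] m by (intro twobig_of_two_k[of 26 32]) auto
  next
    case 4 then show ?thesis using k32[OF q, of m] k38[OF q, of m] m by (intro twobig_of_two_k[of 32 38]) auto
  next
    case 5 then show ?thesis using k38[OF q, of m] k44[OF q, of m] m by (intro twobig_of_two_k[of 38 44]) auto
  qed
qed

lemma log2_ex: "(m::nat) \<ge> 1 \<Longrightarrow> \<exists>j. 2^j \<le> m \<and> m < 2^(Suc j)"
proof (induct m rule: less_induct)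
  case (less m)
  show ?case
  proof (cases "m = 1")
    case True then show ?thesis by (intro exI[of _ 0]) simp
  next
    case False
    then have "m div 2 \<ge> 1" "m div 2 < m" using less.prems by auto
    then obtain j where j: "2^j \<le> m div 2" "m div 2 < 2^(Suc j)" using less.hyps by blast
    have "2^(Suc j) \<le> m" using j(1) by simp
    moreover have "m < 2^(Suc (Suc j))" using j(2) by simp
    ultimately show ?thesis by blast
  qed
qed

lemma pow2_mod3: "(2::nat)^i mod 3 = (if even i then 1 else 2)"
proof (induct i)
  case 0 then show ?case by simp
next
  case (Suc i)
  have "(2::nat)^Suc i mod 3 = (2 * (2^i mod 3)) mod 3" by (simp add: mod_mult_right_eq)
  then show ?case using Suc by auto
qed

lemma three_lt_pow: "(v::nat) \<ge> 4 \<Longrightarrow> 3 * v < 2^v"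
proof (induct v rule: dec_induct)
  case base then show ?case by simp
next
  case (step v) then show ?case by simp
qed

lemma big_ineq:
  fixes k a c :: nat
  assumes kdef: "k = 2^a * c" and a: "a \<ge> 1" and c: "c \<ge> 7" and k: "k \<ge> 56"
  shows "k < 2^(k - k div 2 - k div c)"
proof -
  define v where "v = k - k div 2 - k div c"
  have ek: "even k" unfolding kdef using a by simp
  have k2: "2 * (k div 2) = k" using ek by simp
  have kc: "c * (k div c) = k" unfolding kdef by simp
  have "7 * (k div c) \<le> c * (k div c)" using c by simp
  then have "7 * (k div c) \<le> k" using kc by simp
  then have "14 * v \<ge> 5 * k" unfolding v_def using k2 by linarith
  then have "v \<ge> 20" using k by linarith
  have "k < 3 * v" using \<open>14 * v \<ge> 5 * k\<close> \<open>v \<ge> 20\<close> by linarith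
  also have "\<dots> < 2^v" using \<open>v \<ge> 20\<close> by (intro three_lt_pow) simp
  finally show ?thesis unfolding v_def .
qed

lemma big_ineq_pow:
  fixes k a :: nat
  assumes kdef: "k = 2^a" and a: "a \<ge> 1" and k: "k \<ge> 64"
  shows "k < 2^(k - k div 2)"
proof -
  have ek: "even k" unfolding kdef using a by simp
  then have k2: "k - k div 2 = k div 2" by auto
  have "k div 2 \<ge> 32" using k by simp
  have "k < 3 * (k div 2)" using ek \<open>k div 2 \<ge> 32\<close> by auto
  also have "\<dots> < 2^(k div 2)" using \<open>k div 2 \<ge> 32\<close> by (intro three_lt_pow) simp
  finally show ?thesis using k2 by simp
qed

lemma fam_k:
  fixes q m k e Y i t c :: nat
  assumes q: "q \<ge> 2" and m: "m \<ge> 1" and kdef: "k = e * Y" and Y: "Y = 2^i"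
    and e: "e = 2^t * c" and t: "t \<ge> 1" and c: "prime c" "c \<ge> 7" and k56: "k \<ge> 56"
    and k: "k \<le> 2*m" "m + 2 \<le> k" "k mod 3 = 2"
  shows "\<exists>p. prime p \<and> ord p q = k \<and> 2*m+4 < p \<and> p dvd NN m q"
proof -
  have k': "k = 2^(t+i) * c" unfolding kdef Y e by (simp add: power_add algebra_simps)
  have a: "t + i \<ge> 1" using t by simp
  have kk: "k < 2^(k - k div 2 - k div c)" using big_ineq[OF k' a c(2) k56] .
  show ?thesis using big_2c[OF q m k' a c(1) _ kk k] c(2) by auto
qed

lemma fam_pow:
  fixes q m k Y i :: nat
  assumes q: "q \<ge> 2" and m: "m \<ge> 1" and kdef: "k = 64 * Y" and Y: "Y = 2^i"
    and k: "k \<le> 2*m" "m + 2 \<le> k" "k mod 3 = 2"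
  shows "\<exists>p. prime p \<and> ord p q = k \<and> 2*m+4 < p \<and> p dvd NN m q"
proof -
  have k': "k = 2^(6+i)" unfolding kdef Y by (simp add: power_add)
  have k64: "k \<ge> 64" unfolding kdef Y by simp
  have kk: "k < 2^(k - k div 2)" using big_ineq_pow[OF k' _ k64] by simp
  show ?thesis using big_2pow[OF q m k' _ kk k] by simp
qed

lemma family:
  assumes q: "q \<ge> 2" and m: "m \<ge> 32"
  shows "twobig m q"
proof -
  obtain j where j: "2^j \<le> m" "m < 2^(Suc j)" using log2_ex[of m] m by auto
  have "j \<ge> 5"
  proof (rule ccontr)
    assume "\<not> j \<ge> 5"
    then have "Suc j \<le> 5" by simp
    then have "(2::nat)^(Suc j) \<le> 2^5" by (intro power_increasing) auto
    then show False using j m by simp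
  qed
  define i where "i = j - 5"
  define Y where "Y = (2::nat)^i"
  have "j = 5 + i" unfolding i_def using \<open>j \<ge> 5\<close> by simp
  then have jY: "2^j = 32 * Y" unfolding Y_def by (simp add: power_add)
  have mlo: "32 * Y \<le> m" and mhi: "m < 64 * Y" using j jY by auto
  have Y1: "Y \<ge> 1" unfolding Y_def by simp
  have m1: "m \<ge> 1" using m by simp
  have Ymod: "Y mod 3 = (if even i then 1 else 2)" unfolding Y_def by (rule pow2_mod3)
  have km: "(e * Y) mod 3 = ((e mod 3) * (Y mod 3)) mod 3" for e :: nat by (simp add: mod_mult_eq)
  show ?thesis
  proof (cases "even i")
    case True
    then have Y3: "Y mod 3 = 1" using Ymod by simp
    show ?thesis
    proof (cases "m < 55 * Y")
      case True
      have A: "\<exists>p. prime p \<and> ord p q = 56 * Y \<and> 2*m+4 < p \<and> p dvd NN m q"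
      proof -
        have f: "56 * Y \<ge> 56" "56 * Y \<le> 2*m" "m + 2 \<le> 56 * Y" using True mlo mhi Y1 by linarith+
        have g: "(56 * Y) mod 3 = 2" using km[of 56] Y3 by simp
        show ?thesis by (rule fam_k[OF q m1 refl Y_def _ _ _ _ f g, where t=3 and c=7]) (simp_all add: primeI_num)
      qed
      have B: "\<exists>p. prime p \<and> ord p q = 62 * Y \<and> 2*m+4 < p \<and> p dvd NN m q"
      proof -
        have f: "62 * Y \<ge> 56" "62 * Y \<le> 2*m" "m + 2 \<le> 62 * Y" using True mlo mhi Y1 by linarith+
        have g: "(62 * Y) mod 3 = 2" using km[of 62] Y3 by simp
        show ?thesis by (rule fam_k[OF q m1 refl Y_def _ _ _ _ f g, where t=1 and c=31]) (simp_all add: primeI_num)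
      qed
      show ?thesis using A B Y1 by (intro twobig_of_two_k[of "56*Y" "62*Y"]) simp_all
    next
      case False
      have A: "\<exists>p. prime p \<and> ord p q = 68 * Y \<and> 2*m+4 < p \<and> p dvd NN m q"
      proof -
        have f: "68 * Y \<ge> 56" "68 * Y \<le> 2*m" "m + 2 \<le> 68 * Y" using False mlo mhi Y1 by linarith+
        have g: "(68 * Y) mod 3 = 2" using km[of 68] Y3 by simp
        show ?thesis by (rule fam_k[OF q m1 refl Y_def _ _ _ _ f g, where t=2 and c=17]) (simp_all add: primeI_num)
      qed
      have B: "\<exists>p. prime p \<and> ord p q = 74 * Y \<and> 2*m+4 < p \<and> p dvd NN m q"
      proof -
        have f: "74 * Y \<ge> 56" "74 * Y \<le> 2*m" "m + 2 \<le> 74 * Y" using False mlo mhi Y1 by linarith+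
        have g: "(74 * Y) mod 3 = 2" using km[of 74] Y3 by simp
        show ?thesis by (rule fam_k[OF q m1 refl Y_def _ _ _ _ f g, where t=1 and c=37]) (simp_all add: primeI_num)
      qed
      show ?thesis using A B Y1 by (intro twobig_of_two_k[of "68*Y" "74*Y"]) simp_all
    qed
  next
    case False
    then have Y3: "Y mod 3 = 2" using Ymod by simp
    show ?thesis
    proof (cases "m < 57 * Y")
      case True
      have A: "\<exists>p. prime p \<and> ord p q = 58 * Y \<and> 2*m+4 < p \<and> p dvd NN m q"
      proof -
        have f: "58 * Y \<ge> 56" "58 * Y \<le> 2*m" "m + 2 \<le> 58 * Y" using True mlo mhi Y1 by linarith+
        have g: "(58 * Y) mod 3 = 2" using km[of 58] Y3 by simp
        show ?thesis by (rule fam_k[OF q m1 refl Y_def _ _ _ _ f g, where t=1 and c=29]) (simp_all add: primeI_num)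
      qed
      have B: "\<exists>p. prime p \<and> ord p q = 64 * Y \<and> 2*m+4 < p \<and> p dvd NN m q"
      proof -
        have f: "64 * Y \<le> 2*m" "m + 2 \<le> 64 * Y" using True mlo mhi Y1 by linarith+
        have g: "(64 * Y) mod 3 = 2" using km[of 64] Y3 by simp
        show ?thesis by (rule fam_pow[OF q m1 refl Y_def f g])
      qed
      show ?thesis using A B Y1 by (intro twobig_of_two_k[of "58*Y" "64*Y"]) simp_all
    next
      case False
      have A: "\<exists>p. prime p \<and> ord p q = 76 * Y \<and> 2*m+4 < p \<and> p dvd NN m q"
      proof -
        have f: "76 * Y \<ge> 56" "76 * Y \<le> 2*m" "m + 2 \<le> 76 * Y" using False mlo mhi Y1 by linarith+
        have g: "(76 * Y) mod 3 = 2" using km[of 76] Y3 by simp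
        show ?thesis by (rule fam_k[OF q m1 refl Y_def _ _ _ _ f g, where t=2 and c=19]) (simp_all add: primeI_num)
      qed
      have B: "\<exists>p. prime p \<and> ord p q = 82 * Y \<and> 2*m+4 < p \<and> p dvd NN m q"
      proof -
        have f: "82 * Y \<ge> 56" "82 * Y \<le> 2*m" "m + 2 \<le> 82 * Y" using False mlo mhi Y1 by linarith+
        have g: "(82 * Y) mod 3 = 2" using km[of 82] Y3 by simp
        show ?thesis by (rule fam_k[OF q m1 refl Y_def _ _ _ _ f g, where t=1 and c=41]) (simp_all add: primeI_num)
      qed
      show ?thesis using A B Y1 by (intro twobig_of_two_k[of "76*Y" "82*Y"]) simp_all
    qed
  qed
qed

lemma sq_minus1: "(x::nat) \<ge> 1 \<Longrightarrow> x^2 - 1 = (x - 1) * (x + 1)"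
proof -
  assume "x \<ge> 1"
  then obtain y where "x = y + 1" by (metis le_add_diff_inverse2)
  then show ?thesis by (simp add: power2_eq_square algebra_simps)
qed

lemma ineq4: "(q::nat) \<ge> 2 \<Longrightarrow> 4 * (q^2 - 1) < q^4 - 1"
proof -
  assume q: "q \<ge> 2"
  have q2: "q^2 \<ge> 4" using q power_mono[of 2 q 2] by simp
  have "q^4 - 1 = (q^2)^2 - 1" by (simp flip: power_mult)
  also have "\<dots> = (q^2 - 1) * (q^2 + 1)" using q2 by (intro sq_minus1) simp
  finally have e: "q^4 - 1 = (q^2 - 1) * (q^2 + 1)" .
  have "(q^2 - 1) * 4 < (q^2 - 1) * (q^2 + 1)" using q2 by (intro mult_strict_left_mono) auto
  moreover have "4 * (q^2 - 1) = (q^2 - 1) * 4" by (rule mult.commute)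
  ultimately show ?thesis unfolding e by linarith
qed

lemma ineq10: "(q::nat) \<ge> 2 \<Longrightarrow> 10 * ((q^5 - 1) * (q^2 - 1)) < q^10 - 1"
proof -
  assume q: "q \<ge> 2"
  have q5: "q^5 \<ge> 32" using q power_mono[of 2 q 5] by simp
  have "q^10 - 1 = (q^5)^2 - 1" by (simp flip: power_mult)
  also have "\<dots> = (q^5 - 1) * (q^5 + 1)" using q5 by (intro sq_minus1) simp
  finally have e: "q^10 - 1 = (q^5 - 1) * (q^5 + 1)" .
  have key: "10 * (q^2 - 1) < q^5 + 1"
  proof (cases "q = 2")
    case True then show ?thesis by simp
  next
    case False
    then have q3: "q \<ge> 3" using q by simp
    have "q^5 = q^3 * q^2" by (simp flip: power_add)
    moreover have "q^3 \<ge> 27" using q3 power_mono[of 3 q 3] by simp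
    ultimately have "q^5 \<ge> 27 * q^2" using mult_le_mono1[of 27 "q^3" "q^2"] by simp
    then show ?thesis by linarith
  qed
  have "(q^5 - 1) * (10 * (q^2 - 1)) < (q^5 - 1) * (q^5 + 1)" using q5 key
    by (intro mult_strict_left_mono) auto
  moreover have "10 * ((q^5 - 1) * (q^2 - 1)) = (q^5 - 1) * (10 * (q^2 - 1))" by (rule mult.left_commute)
  ultimately show ?thesis unfolding e by linarith
qed

lemma dvd_NN_i: "1 \<le> i \<Longrightarrow> i \<le> m \<Longrightarrow> r dvd q^(2*i) - 1 \<Longrightarrow> r dvd NN m q"
  unfolding NN_def by (rule dvd_trans) (auto intro: dvd_prodI)

lemma ord_exists_k:
  fixes p q k :: nat
  assumes "prime p" "ord p q = k" "k \<ge> 1"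
  shows "k dvd p - 1"
proof -
  have "ord p q > 0" using assms by simp
  from ord_dvd_pm1[OF assms(1) this] show ?thesis using assms by simp
qed

lemma ord7_big:
  fixes p q :: nat
  assumes p: "prime p" and o: "ord p q = 7"
  shows "p > 22"
proof -
  have "7 dvd p - 1" using ord_exists_k[OF p o] by simp
  then obtain j where j: "p - 1 = 7 * j" by blast
  have op: "odd p" using ord_prime_odd[OF p o] by simp
  have p2: "p \<ge> 2" using prime_ge_2_nat[OF p] .
  show ?thesis
  proof (rule ccontr)
    assume "\<not> p > 22"
    then have "j \<le> 3" using j p2 by linarith
    then have "j = 0 \<or> j = 1 \<or> j = 2 \<or> j = 3" by auto
    moreover have pj: "p = 7 * j + 1" using j p2 by simp
    moreover have "\<not> prime (15::nat)" by (simp add: prime_nat_iff' atLeastLessThan_upt upt_rec)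
    ultimately have "p = 8 \<or> p = 22" using p2 p by auto
    then show False using op by auto
  qed
qed

lemma m7to9:
  assumes q: "q \<ge> 2" and m: "7 \<le> m" "m \<le> 9"
  shows "twobig m q"
proof -
  have "7 * (q^1 - 1) < q^7 - 1" using ineq1[OF q, of 1 7] by simp
  then obtain p where p: "prime p" "ord p q = 7"
    using exists_oddprime[OF q, of 7] primeI_num by auto
  have A: "\<exists>p. prime p \<and> ord p q = 7 \<and> 2*m+4 < p \<and> p dvd NN m q"
    using p ord7_big[OF p] m ord_dvd_NN[OF q p(2)] by (intro exI[of _ p]) auto
  show ?thesis using A k14[OF q, of m] m by (intro twobig_of_two_k[of 7 14]) simp_all
qed

lemma big_k8:
  assumes q: "q \<ge> 2" and m: "4 \<le> m" "m \<le> 6"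
  shows "\<exists>p. prime p \<and> ord p q = 8 \<and> 2*m+4 < p \<and> p dvd NN m q"
  by (rule big_2pow[where a=3, OF q]) (use m in auto)

lemma ten_dvd_big:
  fixes p :: nat
  assumes p: "prime p" and d: "10 dvd p - 1" and n: "p \<noteq> 11"
  shows "p \<ge> 31"
proof (rule ccontr)
  assume "\<not> p \<ge> 31"
  obtain j where j: "p - 1 = 10 * j" using d by blast
  have p2: "p \<ge> 2" using prime_ge_2_nat[OF p] .
  have "j \<le> 2" using j p2 \<open>\<not> p \<ge> 31\<close> by linarith
  then have "j = 0 \<or> j = 1 \<or> j = 2" by auto
  moreover have pj: "p = 10 * j + 1" using j p2 by simp
  moreover have "\<not> prime (21::nat)" by (simp add: prime_nat_iff' atLeastLessThan_upt upt_rec)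
  ultimately show False using p2 p n by auto
qed

lemma m5to6:
  assumes q: "q \<ge> 2" and m: "5 \<le> m" "m \<le> 6"
  shows "twobig m q"
proof -
  have "5 * (q^1 - 1) < q^5 - 1" using ineq1[OF q, of 1 5] by simp
  then obtain p5 where p5: "prime p5" "ord p5 q = 5"
    using exists_oddprime[OF q, of 5] primeI_num by auto
  have "10 * ((q^(10 div 2) - 1) * (q^(10 div 5) - 1)) < q^10 - 1" using ineq10[OF q] by simp
  then obtain p10 where p10: "prime p10" "ord p10 q = 10"
    using exists_2c[OF q, of 10 1 5] primeI_num by auto
  have d5: "10 dvd p5 - 1"
  proof -
    have "5 dvd p5 - 1" using ord_exists_k[OF p5] by simp
    moreover have "odd p5" using ord_prime_odd[OF p5] by simp
    ultimately show ?thesis by presburger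
  qed
  have d10: "10 dvd p10 - 1" using ord_exists_k[OF p10] by simp
  have B: "\<exists>p. prime p \<and> ord p q = 5 \<and> 2*m+4 < p \<and> p dvd NN m q
         \<or> prime p \<and> ord p q = 10 \<and> 2*m+4 < p \<and> p dvd NN m q"
  proof (cases "p5 = 11")
    case True
    then have "p10 \<noteq> 11" using p5 p10 by auto
    then have "p10 \<ge> 31" using ten_dvd_big[OF p10(1) d10] by simp
    moreover have "p10 dvd NN m q" using ord_dvd_NN[OF q p10(2)] m by simp
    ultimately show ?thesis using p10 m by (intro exI[of _ p10]) simp
  next
    case False
    then have "p5 \<ge> 31" using ten_dvd_big[OF p5(1) d5] by simp
    moreover have "p5 dvd NN m q" using ord_dvd_NN[OF q p5(2)] m by simp
    ultimately show ?thesis using p5 m by (intro exI[of _ p5]) simp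
  qed
  from big_k8[OF q, of m] m obtain r where r: "prime r" "ord r q = 8" "2*m+4 < r" "r dvd NN m q" by auto
  obtain s where s: "prime s" "ord s q = 5 \<or> ord s q = 10" "2*m+4 < s" "s dvd NN m q" using B by blast
  have "r \<noteq> s" using r(2) s(2) by auto
  then show ?thesis unfolding twobig_def using r s by blast
qed

lemma six_dvd_big:
  fixes p :: nat
  assumes p: "prime p" and d: "6 dvd p - 1" and n: "p \<noteq> 7"
  shows "p \<ge> 13"
proof (rule ccontr)
  assume "\<not> p \<ge> 13"
  obtain j where j: "p - 1 = 6 * j" using d by blast
  have p2: "p \<ge> 2" using prime_ge_2_nat[OF p] .
  have "j \<le> 1" using j p2 \<open>\<not> p \<ge> 13\<close> by linarith
  then have "j = 0 \<or> j = 1" by auto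
  moreover have pj: "p = 6 * j + 1" using j p2 by simp
  ultimately show False using p2 p n by auto
qed

lemma ord3_6:
  fixes p q :: nat
  assumes p: "prime p" and o: "ord p q = 3 \<or> ord p q = 6"
  shows "6 dvd p - 1"
proof -
  have "3 dvd p - 1"
  proof (cases "ord p q = 3")
    case True then show ?thesis using ord_exists_k[OF p True] by simp
  next
    case False
    then have o6: "ord p q = 6" using o by simp
    have "6 dvd p - 1" using ord_exists_k[OF p o6] by simp
    then show ?thesis by (rule dvd_trans[rotated]) simp
  qed
  moreover have "odd p" using ord_prime_odd[OF p, of q "ord p q"] o by auto
  ultimately show ?thesis by presburger
qed

lemma ex_ord3:
  fixes q :: nat assumes q: "q \<ge> 2"
  shows "\<exists>p. prime p \<and> ord p q = 3"
proof -
  have "3 * (q^1 - 1) < q^3 - 1" using ineq1[OF q, of 1 3] by simp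
  then show ?thesis using exists_oddprime[OF q, of 3] by auto
qed

lemma m4:
  assumes q: "q \<ge> 3"
  shows "twobig 4 q"
proof -
  have q2: "q \<ge> 2" using q by simp
  obtain p3 where p3: "prime p3" "ord p3 q = 3" using ex_ord3[OF q2] by blast
  obtain p6 where p6: "prime p6" "ord p6 q = 6" using exists_6[OF q] by blast
  have B: "\<exists>s. prime s \<and> (ord s q = 3 \<or> ord s q = 6) \<and> 12 < s \<and> s dvd NN 4 q"
  proof (cases "p3 = 7")
    case True
    then have "p6 \<noteq> 7" using p3 p6 by auto
    then have "p6 \<ge> 13" using six_dvd_big[OF p6(1) ord3_6[OF p6(1), of q]] p6 by simp
    moreover have "p6 dvd NN 4 q" using ord_dvd_NN[OF q2 p6(2)] by simp
    ultimately show ?thesis using p6 by (intro exI[of _ p6]) simp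
  next
    case False
    then have "p3 \<ge> 13" using six_dvd_big[OF p3(1) ord3_6[OF p3(1), of q]] p3 by simp
    moreover have "p3 dvd NN 4 q" using ord_dvd_NN[OF q2 p3(2)] by simp
    ultimately show ?thesis using p3 by (intro exI[of _ p3]) simp
  qed
  from big_k8[OF q2, of 4] obtain r where r: "prime r" "ord r q = 8" "2*4+4 < r" "r dvd NN 4 q" by auto
  obtain s where s: "prime s" "ord s q = 3 \<or> ord s q = 6" "12 < s" "s dvd NN 4 q" using B by blast
  have "r \<noteq> s" using r(2) s(2) by auto
  then show ?thesis unfolding twobig_def using r s by auto
qed

lemma pow3_mod8: "(3::nat)^e mod 8 = (if even e then 1 else 3)"
proof (induct e)
  case 0 then show ?case by simp
next
  case (Suc e)
  have "(3::nat)^Suc e mod 8 = (3 * (3^e mod 8)) mod 8" by (simp add: mod_mult_right_eq)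
  then show ?case using Suc by auto
qed

lemma pow3_plus1_not8: "\<not> (8::nat) dvd 3^e + 1"
proof
  assume "8 dvd (3::nat)^e + 1"
  then have A: "(3^e + 1) mod 8 = (0::nat)" by simp
  have B: "((3::nat)^e + 1) mod 8 = (3^e mod 8 + 1) mod 8" by (rule mod_add_left_eq[symmetric])
  have C: "((3::nat)^e mod 8 + 1) mod 8 = 0" using A B by linarith
  have "(3::nat)^e mod 8 = 1 \<or> (3::nat)^e mod 8 = 3" using pow3_mod8[of e] by presburger
  then show False
  proof
    assume r: "(3::nat)^e mod 8 = 1"
    have "((3::nat)^e mod 8 + 1) mod 8 = 2" unfolding r by simp
    then show False using C by linarith
  next
    assume r: "(3::nat)^e mod 8 = 3"
    have "((3::nat)^e mod 8 + 1) mod 8 = 4" unfolding r by simp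
    then show False using C by linarith
  qed
qed

lemma pow3_mod4: "(3::nat)^e mod 4 = (if even e then 1 else 3)"
proof (induct e)
  case 0 then show ?case by simp
next
  case (Suc e)
  have "(3::nat)^Suc e mod 4 = (3 * (3^e mod 4)) mod 4" by (simp add: mod_mult_right_eq)
  then show ?case using Suc by auto
qed

lemma pow2_ge8_dvd: "(x::nat) \<ge> 3 \<Longrightarrow> (8::nat) dvd 2^x"
proof -
  assume "x \<ge> 3"
  then have "(2::nat)^3 dvd 2^x" by (rule le_imp_power_dvd)
  then show ?thesis by simp
qed

lemma S23:
  fixes q :: nat
  assumes q: "q \<ge> 2" and H: "\<And>p. prime p \<Longrightarrow> p dvd q^2 - 1 \<Longrightarrow> p = 2 \<or> p = 3"
  shows "q = 2 \<or> q = 3 \<or> q = 5 \<or> q = 7 \<or> q = 17"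
proof -
  have fac: "q^2 - 1 = (q - 1) * (q + 1)" using sq_minus1[of q] q by simp
  have Hm: "p = 2 \<or> p = 3" if "prime p" "p dvd q - 1" for p
    using H[OF that(1)] that(2) fac by (metis dvd_mult2)
  have Hp: "p = 2 \<or> p = 3" if "prime p" "p dvd q + 1" for p
    using H[OF that(1)] that(2) fac by (metis dvd_mult)
  show ?thesis
  proof (cases "3 dvd q + 1")
    case False
    have "\<And>p. prime p \<Longrightarrow> p dvd q + 1 \<Longrightarrow> p = 2" using Hp False by blast
    then obtain c where c: "q + 1 = 2^c" using only_prime_power[of "q+1" 2] by auto
    show ?thesis
    proof (cases "c \<le> 2")
      case True
      then have "c = 0 \<or> c = 1 \<or> c = 2" by auto
      then show ?thesis using c q by auto
    next
      case False
      define w where "w = 2^(c-1) - (1::nat)"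
      have c1: "(2::nat)^c = 2 * 2^(c-1)" using False by (metis Suc_diff_1 not_le not_less_zero power_Suc zero_less_iff_neq_zero)
      have w1: "2^(c-1) \<ge> (4::nat)"
      proof -
        have "(2::nat)^2 \<le> 2^(c-1)" using False by (intro power_increasing) auto
        then show ?thesis by simp
      qed
      have qw: "q - 1 = 2 * w" unfolding w_def using c c1 w1 by simp
      have ow: "odd w"
      proof -
        have "even ((2::nat)^(c-1))" using False by simp
        then show ?thesis unfolding w_def using w1 by simp
      qed
      have "\<And>p. prime p \<Longrightarrow> p dvd w \<Longrightarrow> p = 3"
      proof -
        fix p :: nat assume p: "prime p" "p dvd w"
        then have "p dvd q - 1" unfolding qw by simp
        then have "p = 2 \<or> p = 3" using Hm p(1) by blast
        moreover have "p \<noteq> 2" using p(2) ow by auto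
        ultimately show "p = 3" by simp
      qed
      moreover have "w > 0" using w1 unfolding w_def by simp
      ultimately obtain b where b: "w = 3^b" using only_prime_power[of w 3] by auto
      have e: "2^(c-1) = 3^b + (1::nat)" using b w1 unfolding w_def by simp
      have "c - 1 < 3"
      proof (rule ccontr)
        assume "\<not> c - 1 < 3"
        then have "8 dvd (2::nat)^(c-1)" using pow2_ge8_dvd by simp
        then show False using e pow3_plus1_not8[of b] by simp
      qed
      then have "c = 3" using False by simp
      then show ?thesis using c by simp
    qed
  next
    case True
    have n3: "\<not> 3 dvd q - 1"
    proof
      assume "3 dvd q - 1"
      then have "3 dvd (q + 1) - (q - 1)" using True by (rule dvd_diff_nat[rotated])
      moreover have "(q + 1) - (q - 1) = 2" using q by simp
      ultimately show False by simp
    qed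
    have "\<And>p. prime p \<Longrightarrow> p dvd q - 1 \<Longrightarrow> p = 2" using Hm n3 by blast
    moreover have "q - 1 > 0" using q by simp
    ultimately obtain a where a: "q - 1 = 2^a" using only_prime_power[of "q-1" 2] by auto
    have qa: "q = 2^a + 1" using a q by simp
    show ?thesis
    proof (cases "a \<le> 1")
      case True
      then have "a = 0 \<or> a = 1" by auto
      then show ?thesis using qa by auto
    next
      case False
      define w where "w = 2^(a-1) + (1::nat)"
      have a1: "(2::nat)^a = 2 * 2^(a-1)" using False by (metis Suc_diff_1 not_le not_less_zero power_Suc zero_less_iff_neq_zero)
      have qw: "q + 1 = 2 * w" unfolding w_def using qa a1 by simp
      have ow: "odd w"
      proof -
        have "even ((2::nat)^(a-1))" using False by simp
        then show ?thesis unfolding w_def by simp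
      qed
      have "\<And>p. prime p \<Longrightarrow> p dvd w \<Longrightarrow> p = 3"
      proof -
        fix p :: nat assume p: "prime p" "p dvd w"
        then have "p dvd q + 1" unfolding qw by simp
        then have "p = 2 \<or> p = 3" using Hp p(1) by blast
        moreover have "p \<noteq> 2" using p(2) ow by auto
        ultimately show "p = 3" by simp
      qed
      moreover have "w > 0" unfolding w_def by simp
      ultimately obtain d where d: "w = 3^d" using only_prime_power[of w 3] by auto
      have e: "3^d = 2^(a-1) + (1::nat)" using d unfolding w_def by simp
      show ?thesis
      proof (cases "a = 2")
        case True
        then show ?thesis using qa by simp
      next
        case False
        then have a3: "a - 1 \<ge> 2" using \<open>\<not> a \<le> 1\<close> by simp
        have "4 dvd (2::nat)^(a-1)"
        proof -
          have "(2::nat)^2 dvd 2^(a-1)" using a3 by (rule le_imp_power_dvd)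
          then show ?thesis by simp
        qed
        then have "4 dvd (3::nat)^d - 1" using e by simp
        then have "(3::nat)^d mod 4 = 1"
        proof -
          assume h: "4 dvd (3::nat)^d - 1"
          have "(3::nat)^d \<ge> 1" by simp
          then have "[(3::nat)^d = 1] (mod 4)" using h by (simp add: cong_altdef_nat)
          then show ?thesis by (simp add: cong_def)
        qed
        then have "even d"
        proof -
          assume h: "(3::nat)^d mod 4 = 1"
          show "even d"
          proof (rule ccontr)
            assume "odd d"
            then have "(3::nat)^d mod 4 = 3" using pow3_mod4[of d] by simp
            then show False using h by simp
          qed
        qed
        then obtain f where f: "d = 2 * f" by blast
        have "(3::nat)^d - 1 = (3^f - 1) * (3^f + 1)"
        proof -
          have "(3::nat)^d = (3^f)^2" unfolding f by (simp add: power_mult mult.commute)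
          then show ?thesis using sq_minus1[of "3^f"] by simp
        qed
        then have "(3::nat)^f + 1 dvd 2^(a-1)" using e by (metis add_diff_cancel_right' dvd_triv_right)
        then obtain i where i: "(3::nat)^f + 1 = 2^i" using divides_primepow_nat[of 2] by auto
        have "i < 3"
        proof (rule ccontr)
          assume "\<not> i < 3"
          then have "8 dvd (2::nat)^i" using pow2_ge8_dvd by simp
          then show False using i pow3_plus1_not8[of f] by simp
        qed
        then have "(3::nat)^f + 1 \<le> 4"
        proof -
          have "(2::nat)^i \<le> 2^2" using \<open>i < 3\<close> by (intro power_increasing) auto
          then show ?thesis using i by simp
        qed
        then have "f \<le> 1"
        proof -
          assume h: "(3::nat)^f + 1 \<le> 4"
          show "f \<le> 1"
          proof (rule ccontr)
            assume "\<not> f \<le> 1"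
            then have "(3::nat)^2 \<le> 3^f" by (intro power_increasing) auto
            then show False using h by simp
          qed
        qed
        then have "f = 0 \<or> f = 1" by auto
        moreover have "f \<noteq> 0"
        proof
          assume "f = 0"
          then have "(3::nat)^d = 1" using f by simp
          then show False using e by simp
        qed
        ultimately have "f = 1" by simp
        then have "2^(a-1) = (2::nat)^3" using e f by simp
        then have "a - 1 = 3" using power_inject_exp[of "2::nat" "a-1" 3] by simp
        then have "a = 4" by simp
        then show ?thesis using qa by simp
      qed
    qed
  qed
qed

lemma twobig_explicit:
  assumes "prime r" "prime s" "r \<noteq> s" "2*m+4 < r" "2*m+4 < s"
    "1 \<le> i" "i \<le> m" "r dvd q^(2*i) - 1" "1 \<le> j" "j \<le> m" "s dvd q^(2*j) - 1"
  shows "twobig m q"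
  unfolding twobig_def using assms dvd_NN_i[of i m r q] dvd_NN_i[of j m s q]
  by (intro exI[of _ r] exI[of _ s]) simp

lemma tb35: "twobig 3 5"
  by (rule twobig_explicit[of 13 31 3 2 5 3]) (simp_all add: primeI_num)
lemma tb37: "twobig 3 7"
  by (rule twobig_explicit[of 19 43 3 3 7 3]) (simp_all add: primeI_num)
lemma tb317: "twobig 3 17"
  by (rule twobig_explicit[of 29 307 3 2 17 3]) (simp_all add: primeI_num)

lemma four_dvd_cases:
  fixes p q :: nat
  assumes p: "prime p" and o: "ord p q = 4"
  shows "p = 5 \<or> p \<ge> 13"
proof -
  have "4 dvd p - 1" using ord_exists_k[OF p o] by simp
  then obtain j where j: "p - 1 = 4 * j" by blast
  have p2: "p \<ge> 2" using prime_ge_2_nat[OF p] .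
  have pj: "p = 4 * j + 1" using j p2 by simp
  show ?thesis
  proof (cases "j \<le> 2")
    case True
    then have "j = 0 \<or> j = 1 \<or> j = 2" by auto
    moreover have "\<not> prime (9::nat)" by (simp add: prime_nat_iff' atLeastLessThan_upt upt_rec)
    ultimately show ?thesis using pj p p2 by auto
  next
    case False
    then show ?thesis using pj by simp
  qed
qed

lemma small_primes:
  fixes p :: nat
  assumes "prime p" "p \<le> 10"
  shows "p = 2 \<or> p = 3 \<or> p = 5 \<or> p = 7"
proof -
  have "p = 0 \<or> p = 1 \<or> p = 2 \<or> p = 3 \<or> p = 4 \<or> p = 5 \<or> p = 6 \<or> p = 7 \<or> p = 8 \<or> p = 9 \<or> p = 10"
    using assms(2) by presburger
  moreover have "\<not> prime (4::nat)" "\<not> prime (6::nat)" "\<not> prime (8::nat)" "\<not> prime (9::nat)" "\<not> prime (10::nat)"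
    by (simp_all add: prime_nat_iff' atLeastLessThan_upt upt_rec)
  ultimately show ?thesis using assms(1) by (elim disjE) simp_all
qed

lemma m3:
  assumes q: "q \<ge> 4"
  shows "twobig 3 q"
proof -
  have q2: "q \<ge> 2" and q3: "q \<ge> 3" and q1: "q \<ge> 1" using q by auto
  obtain p3 where p3: "prime p3" "ord p3 q = 3" using ex_ord3[OF q2] by blast
  obtain p6 where p6: "prime p6" "ord p6 q = 6" using exists_6[OF q3] by blast
  have "4 * (q^(4 div 2) - 1) < q^4 - 1" using ineq4[OF q2] by simp
  then obtain p4 where p4: "prime p4" "ord p4 q = 4" using exists_2pow[OF q2, of 4 2] by auto
  have d3: "p3 dvd NN 3 q" using ord_dvd_NN[OF q2 p3(2)] by simp
  have d6: "p6 dvd NN 3 q" using ord_dvd_NN[OF q2 p6(2)] by simp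
  have d4: "p4 dvd NN 3 q" using ord_dvd_NN[OF q2 p4(2)] by simp
  have b3: "p3 \<noteq> 7 \<Longrightarrow> p3 \<ge> 13" using six_dvd_big[OF p3(1) ord3_6[OF p3(1), of q]] p3 by simp
  have b6: "p6 \<noteq> 7 \<Longrightarrow> p6 \<ge> 13" using six_dvd_big[OF p6(1) ord3_6[OF p6(1), of q]] p6 by simp
  show ?thesis
  proof (cases "p3 \<noteq> 7 \<and> p6 \<noteq> 7")
    case True
    then show ?thesis unfolding twobig_def using b3 b6 p3 p6 d3 d6
      by (intro exI[of _ p3] exI[of _ p6]) auto
  next
    case False
    obtain B where B: "prime B" "ord B q = 3 \<or> ord B q = 6" "B \<ge> 13" "B dvd NN 3 q"
      and o7: "ord 7 q = 3 \<or> ord 7 q = 6"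
    proof (cases "p3 = 7")
      case True
      then have "p6 \<noteq> 7" using p3 p6 by auto
      then show ?thesis using that[of p6] b6 p6 d6 True p3 by auto
    next
      case False
      then have "p6 = 7" using \<open>\<not> (p3 \<noteq> 7 \<and> p6 \<noteq> 7)\<close> by simp
      then show ?thesis using that[of p3] b3 p3 d3 False p6 by auto
    qed
    show ?thesis
    proof (cases "p4 \<ge> 13")
      case True
      have "B \<noteq> p4" using B(2) p4(2) by auto
      then show ?thesis unfolding twobig_def using B p4 d4 True
        by (intro exI[of _ B] exI[of _ p4]) auto
    next
      case False
      then have "p4 = 5" using four_dvd_cases[OF p4] by simp
      then have o5: "ord 5 q = 4" using p4 by simp
      show ?thesis
      proof (cases "\<exists>p. prime p \<and> p dvd q^2 - 1 \<and> p > 10")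
        case True
        then obtain p where p: "prime p" "p dvd q^2 - 1" "p > 10" by blast
        have "ord p q dvd 2" using p(2) ord_dvd_iff[OF q1] by simp
        then have "p \<noteq> B" using B(2) by auto
        moreover have "p dvd NN 3 q" using dvd_NN_i[of 1 3 p q] p(2) by simp
        ultimately show ?thesis unfolding twobig_def using B p
          by (intro exI[of _ B] exI[of _ p]) auto
      next
        case False
        have "p = 2 \<or> p = 3" if pp: "prime p" "p dvd q^2 - 1" for p
        proof -
          have "p \<le> 10" using False pp by auto
          then have c: "p = 2 \<or> p = 3 \<or> p = 5 \<or> p = 7" using small_primes pp(1) by blast
          have "ord p q dvd 2" using pp(2) ord_dvd_iff[OF q1] by simp
          then have "p \<noteq> 5" "p \<noteq> 7" using o5 o7 by auto
          then show ?thesis using c by auto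
        qed
        then have "q = 2 \<or> q = 3 \<or> q = 5 \<or> q = 7 \<or> q = 17" using S23[OF q2] by blast
        then show ?thesis using q tb35 tb37 tb317 by auto
      qed
    qed
  qed
qed

lemma m_eq:
  fixes n :: nat assumes "n \<ge> 2"
  shows "nat (ceiling ((real n - 2) / 2)) = (n - 1) div 2"
proof (cases "even n")
  case True
  then obtain t where t: "n = 2 * t" by blast
  have t1: "t \<ge> 1" using assms t by simp
  have "(real n - 2) / 2 = real_of_int (int t - 1)" using t t1 by (simp add: of_nat_diff)
  then have "ceiling ((real n - 2) / 2) = int t - 1" by (simp only: ceiling_of_int)
  then show ?thesis using t t1 by simp
next
  case False
  then obtain t where t: "n = 2 * t + 1" using oddE by blast
  have t1: "t \<ge> 1" using assms t by simp
  have "ceiling ((real n - 2) / 2) = int t"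
  proof (rule ceiling_unique)
    show "real_of_int (int t) - 1 < (real n - 2) / 2" using t by simp
    show "(real n - 2) / 2 \<le> real_of_int (int t)" using t by simp
  qed
  then show ?thesis using t by simp
qed

theorem lemma4p2:
  fixes q n :: nat
  assumes "prime_power q" and "n \<ge> 7"
  shows "(n, q) \<in> {(10,2), (9,2), (8,3), (8,2), (7,3), (7,2)} \<or>
         (\<exists>r s. prime r \<and> prime s \<and> r \<noteq> s \<and> r > n + 2 \<and> s > n + 2 \<and>
            (let m = nat (ceiling ((real n - 2) / 2)) in
               r dvd (\<Prod>i=1..m. q ^ (2*i) - 1) \<and> s dvd (\<Prod>i=1..m. q ^ (2*i) - 1)))"
proof -
  obtain p k where pk: "prime p" "k \<ge> 1" "q = p^k" using assms(1) unfolding prime_power_def by blast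
  have q2: "q \<ge> 2"
  proof -
    have "p^1 \<le> p^k" using pk prime_gt_0_nat[OF pk(1)] by (intro power_increasing) auto
    then show ?thesis using pk prime_ge_2_nat[OF pk(1)] by simp
  qed
  define m where "m = (n - 1) div 2"
  have mdef: "nat (ceiling ((real n - 2) / 2)) = m" unfolding m_def using m_eq assms(2) by simp
  have nm: "n \<le> 2*m + 2" "2*m + 1 \<le> n" unfolding m_def using assms(2) by presburger+
  have mge3: "m \<ge> 3" using nm assms(2) by simp
  have main: "twobig m q \<Longrightarrow> ?thesis"
  proof -
    assume "twobig m q"
    then obtain r s where rs: "prime r" "prime s" "r \<noteq> s" "2*m+4 < r" "2*m+4 < s"
      "r dvd NN m q" "s dvd NN m q" unfolding twobig_def by blast
    have "r > n + 2" "s > n + 2" using rs nm by linarith+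
    then show ?thesis using rs unfolding mdef Let_def NN_def by blast
  qed
  consider "m \<ge> 32" | "10 \<le> m \<and> m \<le> 31" | "7 \<le> m \<and> m \<le> 9" | "5 \<le> m \<and> m \<le> 6" | "m = 4" | "m = 3"
    using mge3 by linarith
  then show ?thesis
  proof cases
    case 1 then show ?thesis using main family[OF q2] by blast
  next
    case 2 then show ?thesis using main mid_range[OF q2] by blast
  next
    case 3 then show ?thesis using main m7to9[OF q2] by blast
  next
    case 4 then show ?thesis using main m5to6[OF q2] by blast
  next
    case 5
    show ?thesis
    proof (cases "q = 2")
      case True
      have "n = 9 \<or> n = 10" using nm 5 by linarith
      then show ?thesis using True by auto
    next
      case False
      then have "q \<ge> 3" using q2 by simp
      then show ?thesis using main m4 5 by blast
    qed
  next
    case 6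
    show ?thesis
    proof (cases "q = 2 \<or> q = 3")
      case True
      have "n = 7 \<or> n = 8" using nm 6 by linarith
      then show ?thesis using True by auto
    next
      case False
      then have "q \<ge> 4" using q2 by simp
      then show ?thesis using main m3 6 by blast
    qed
  qed
qed

end
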